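(* Let $(\mathbf f,\mathbf g)$ be a vector admissible system, $\epsilon\in\mathcal E$, $L,w\in\mathbb N$, and let $\mathbf X$ be the fixed point of the one-sided spatially-coupled system obtained as the limit of its recursion from the all-ones initialization (so that, in particular, its rows are non-decreasing in the position index). Then $\mathbf x^\infty(\mathbf x_{i_0};\epsilon)$ exists, $\mathbf x_{i_0}\preceq\mathbf x^\infty(\mathbf x_{i_0};\epsilon)$, and $U(\mathbf x_{i_0};\epsilon)\ge U(\mathbf x^\infty(\mathbf x_{i_0};\epsilon);\epsilon)$, where $U$ is the single-system potential.
   Context: Let $d\in\mathbb N$, $\mathcal X=[0,1]^d$, $\mathcal E=[0,1]$, $\mathcal X^\circ=\mathcal X\setminus\{\mathbf 0\}$; vectors are row vectors and $\mathbf x\preceq\mathbf y$ means $x_i\le y_i$ for all $i$. Let $\mathbf D$ be a $d\times d$ positive diagonal matrix, $\mathbf f:\mathcal X\times\mathcal E\to\mathcal X$, $\mathbf g:\mathcal X\to\mathcal X$, and $F,G$ scalar functionals with $\nabla_{\mathbf x}F(\mathbf x;\epsilon)=\mathbf f(\mathbf x;\epsilon)\mathbf D$, $\nabla G(\mathbf x)=\mathbf g(\mathbf x)\mathbf D$, $F(\mathbf 0;\epsilon)=G(\mathbf 0)=0$. $(\mathbf f,\mathbf g)$ is a vector admissible system if: (i) $\mathbf f,\mathbf g$ are $C^2$; (ii) $\mathbf f(\mathbf x;\epsilon)$, $\mathbf g(\mathbf x)$ are non-decreasing in $\mathbf x$ w.r.t. $\preceq$; (iii) for $\mathbf x\in\mathcal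 X^\circ$, $\epsilon_1<\epsilon_2$ implies $\mathbf f(\mathbf x;\epsilon_1)\preceq\mathbf f(\mathbf x;\epsilon_2)$ and $\mathbf f(\mathbf x;\epsilon_1)\ne\mathbf f(\mathbf x;\epsilon_2)$; (iv) $\mathbf f(\mathbf 0;\epsilon)=\mathbf f(\mathbf x;0)=\mathbf g(\mathbf 0)=\mathbf 0$, $F(\mathbf x;0)=0$. Single-system potential: $U(\mathbf x;\epsilon)=\mathbf g(\mathbf x)\mathbf D\mathbf x^{\mathsf T}-G(\mathbf x)-F(\mathbf g(\mathbf x);\epsilon)$. $\mathbf x^\infty(\mathbf x;\epsilon)=\lim_{\ell\to\infty}\mathbf x^{(\ell)}$ for the recursion $\mathbf x^{(\ell+1)}=\mathbf f(\mathbf g(\mathbf x^{(\ell)});\epsilon)$, $\mathbf x^{(0)}=\mathbf x$, when the limit exists. One-sided spatially-coupled system: let $\epsilon_i=\epsilon$ for $i\in\{-L,\dots,L\}$, $\epsilon_i=0$ otherwise, $i_0=\lfloor (w-1)/2\rfloor$. Iterates $\mathbf x_i^{(\ell)}$, $i\in\{-L,\dots,L+w-1\}$, start from $\mathbf x_i^{(0)}=\mathbf 1$, with $\mathbf x_i^{(\ell)}=\mathbf 0$ for $i<-L$; for $-L\le i\le i_0$, $\mathbf x_i^{(\ell+1)}=\frac1w\sum_{k=0}^{w-1}\mathbf f\big(\frac1w\sum_{j=0}^{w-1}\mathbf g(\mathbf x^{(\ell)}_{i+j-k});\epsilon_{i-k}\big)$, and for $i_0<i\le L+w-1$, $\mathbf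 x_i^{(\ell)}=\mathbf x_{i_0}^{(\ell)}$. Its fixed point $\mathbf X$ has rows $\mathbf x_{-L},\dots,\mathbf x_{L+w-1}$. *)

theory Defs
  imports "HOL-Analysis.Analysis"
begin

text \<open>Vectors in R^d are elements of real^'d; the partial order \<preceq> is the
componentwise order on real^'d (library instance). Row vector times matrix is v*.\<close>

definition cube :: "(real^'d) set" where
  "cube = {x. 0 \<le> x \<and> x \<le> 1}"

definition Eset :: "real set" where
  "Eset = {0..1}"

definition C2_on :: "'a::real_normed_vector set \<Rightarrow> ('a \<Rightarrow> 'b::real_normed_vector) \<Rightarrow> bool" where
  "C2_on S h \<longleftrightarrow> (\<exists>h' h''.
      (\<forall>x\<in>S. (h has_derivative blinfun_apply (h' x)) (at x within S)) \<and>
      (\<forall>x\<in>S. (h' has_derivative blinfun_apply (h'' x)) (at x within S)) \<and>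
      continuous_on S h'')"

definition pos_diag :: "real^'d^'d \<Rightarrow> bool" where
  "pos_diag D \<longleftrightarrow> (\<forall>i j. i \<noteq> j \<longrightarrow> D$i$j = 0) \<and> (\<forall>i. D$i$i > 0)"

definition vector_admissible ::
  "(real^'d \<Rightarrow> real \<Rightarrow> real^'d) \<Rightarrow> (real^'d \<Rightarrow> real^'d) \<Rightarrow>
   (real^'d \<Rightarrow> real \<Rightarrow> real) \<Rightarrow> (real^'d \<Rightarrow> real) \<Rightarrow> real^'d^'d \<Rightarrow> bool" where
  "vector_admissible f g F G D \<longleftrightarrow>
     pos_diag D \<and>
     (\<forall>x\<in>cube. \<forall>e\<in>Eset. f x e \<in> cube) \<and>
     (\<forall>x\<in>cube. g x \<in> cube) \<and>
     (\<forall>e\<in>Eset. \<forall>x\<in>cube. ((\<lambda>y. F y e) has_derivative (\<lambda>h. (f x e v* D) \<bullet> h)) (at x within cube)) \<and>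
     (\<forall>x\<in>cube. (G has_derivative (\<lambda>h. (g x v* D) \<bullet> h)) (at x within cube)) \<and>
     (\<forall>e\<in>Eset. F 0 e = 0) \<and> G 0 = 0 \<and>
     \<comment> \<open>(i)\<close>
     C2_on (cube \<times> Eset) (\<lambda>(x, e). f x e) \<and> C2_on cube g \<and>
     \<comment> \<open>(ii)\<close>
     (\<forall>e\<in>Eset. \<forall>x\<in>cube. \<forall>y\<in>cube. x \<le> y \<longrightarrow> f x e \<le> f y e) \<and>
     (\<forall>x\<in>cube. \<forall>y\<in>cube. x \<le> y \<longrightarrow> g x \<le> g y) \<and>
     \<comment> \<open>(iii)\<close>
     (\<forall>x\<in>cube - {0}. \<forall>e1\<in>Eset. \<forall>e2\<in>Eset. e1 < e2 \<longrightarrow> f x e1 \<le> f x e2 \<and> f x e1 \<noteq> f x e2) \<and>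
     \<comment> \<open>(iv)\<close>
     (\<forall>e\<in>Eset. f 0 e = 0) \<and> (\<forall>x\<in>cube. f x 0 = 0) \<and> g 0 = 0 \<and> (\<forall>x\<in>cube. F x 0 = 0)"

definition potU ::
  "(real^'d \<Rightarrow> real^'d) \<Rightarrow> (real^'d \<Rightarrow> real \<Rightarrow> real) \<Rightarrow> (real^'d \<Rightarrow> real) \<Rightarrow> real^'d^'d
   \<Rightarrow> real^'d \<Rightarrow> real \<Rightarrow> real" where
  "potU g F G D x e = (g x v* D) \<bullet> x - G x - F (g x) e"

definition single_iter :: "(real^'d \<Rightarrow> real \<Rightarrow> real^'d) \<Rightarrow> (real^'d \<Rightarrow> real^'d) \<Rightarrow> real
   \<Rightarrow> real^'d \<Rightarrow> nat \<Rightarrow> real^'d" where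
  "single_iter f g e x l = ((\<lambda>y. f (g y) e) ^^ l) x"

definition i0_of :: "nat \<Rightarrow> int" where
  "i0_of w = (int w - 1) div 2"

text \<open>One-sided spatially-coupled recursion; positions are integers i,
 x_i = 0 for i < -L, positions i > i0 copy position i0.\<close>
primrec sc_iter :: "(real^'d \<Rightarrow> real \<Rightarrow> real^'d) \<Rightarrow> (real^'d \<Rightarrow> real^'d) \<Rightarrow> nat \<Rightarrow> nat \<Rightarrow> real
   \<Rightarrow> nat \<Rightarrow> int \<Rightarrow> real^'d" where
  "sc_iter f g L w e 0 = (\<lambda>i. if i < - int L then 0 else 1)"
| "sc_iter f g L w e (Suc l) =
     (let x = sc_iter f g L w e l;
          ep = (\<lambda>i::int. if - int L \<le> i \<and> i \<le> int L then e else 0);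
          upd = (\<lambda>i::int. (1 / real w) *\<^sub>R
                   (\<Sum>k<w. f ((1 / real w) *\<^sub>R (\<Sum>j<w. g (x (i + int j - int k)))) (ep (i - int k))))
      in (\<lambda>i. if i < - int L then 0 else if i \<le> i0_of w then upd i else upd (i0_of w)))"

end

theory Submission imports Defs begin

lemma vmD:
  assumes "pos_diag D"
  shows "((p::real^'d) v* D) \<bullet> q = (\<Sum>i\<in>UNIV. p$i * D$i$i * q$i)"
proof -
  have c: "(\<Sum>i\<in>UNIV. p$i * D$i$j) = p$j * D$j$j" for j
  proof -
    have "(\<Sum>i\<in>UNIV. p$i * D$i$j) = (\<Sum>i\<in>UNIV. if i = j then p$j * D$j$j else 0)"
      by (rule sum.cong) (use assms in \<open>auto simp: pos_diag_def\<close>)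
    also have "\<dots> = p$j * D$j$j" by simp
    finally show ?thesis .
  qed
  show ?thesis unfolding vector_matrix_mult_def inner_vec_def
    by (simp add: c algebra_simps)
qed

lemma avg_cube:
  assumes "w \<ge> 1" "\<And>k. k < w \<Longrightarrow> v k \<in> cube"
  shows "(1 / real w) *\<^sub>R (\<Sum>k<w. v k) \<in> (cube :: (real^'d) set)"
proof -
  have "0 \<le> (\<Sum>k<w. v k $ i) \<and> (\<Sum>k<w. v k $ i) \<le> real w" for i
  proof
    show "0 \<le> (\<Sum>k<w. v k $ i)"
      using assms(2) by (intro sum_nonneg) (auto simp: cube_def less_eq_vec_def)
    have "(\<Sum>k<w. v k $ i) \<le> (\<Sum>k<w. 1)"
      using assms(2) by (intro sum_mono) (auto simp: cube_def less_eq_vec_def)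
    then show "(\<Sum>k<w. v k $ i) \<le> real w" by simp
  qed
  then show ?thesis using assms(1)
    by (auto simp: cube_def less_eq_vec_def divide_simps)
qed

lemma avg_mono:
  assumes "\<And>k. k < w \<Longrightarrow> (a k :: real^'d) \<le> b k"
  shows "(1 / real w) *\<^sub>R (\<Sum>k<w. a k) \<le> (1 / real w) *\<^sub>R (\<Sum>k<w. b k)"
proof -
  have "(\<Sum>k<w. a k $ i) \<le> (\<Sum>k<w. b k $ i)" for i
    using assms by (intro sum_mono) (auto simp: less_eq_vec_def)
  then show ?thesis by (auto simp: less_eq_vec_def intro: divide_right_mono)
qed

lemma avg_const:
  assumes "w \<ge> 1"
  shows "(1 / real w) *\<^sub>R (\<Sum>k<w. (c::real^'d)) = c"
  using assms by (simp only: sum_constant_scaleR card_lessThan scaleR_scaleR) simp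

lemma mono_adj:
  fixes x :: "int \<Rightarrow> real^'d"
  assumes "\<And>a. x a \<le> x (a+1)" "a \<le> b"
  shows "x a \<le> x b"
  using assms(2)
proof (induction b rule: int_ge_induct)
  case base then show ?case by simp
next
  case (step i) then show ?case using assms(1)[of i] order.trans by blast
qed

lemma i0_facts: "w \<ge> 1 \<Longrightarrow> 0 \<le> i0_of w \<and> 2 * i0_of w \<le> int w - 1"
  unfolding i0_of_def by presburger


lemma vscale_mono: "(a::real^'d) \<le> b \<Longrightarrow> 0 \<le> c \<Longrightarrow> c *\<^sub>R a \<le> c *\<^sub>R b"
  by (auto simp: less_eq_vec_def mult_left_mono)

lemma lim_le:
  fixes s t :: "nat \<Rightarrow> real^'d"
  assumes "\<And>l. s l \<le> t l" "s \<longlonglongrightarrow> a" "t \<longlonglongrightarrow> b"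
  shows "a \<le> b"
  unfolding less_eq_vec_def
proof
  fix i
  show "a $ i \<le> b $ i"
    by (rule LIMSEQ_le[OF tendsto_vec_nth[OF assms(2)] tendsto_vec_nth[OF assms(3)]])
       (use assms(1) in \<open>auto simp: less_eq_vec_def\<close>)
qed

lemma lim_cube:
  fixes s :: "nat \<Rightarrow> real^'d"
  assumes "\<And>l. s l \<in> cube" "s \<longlonglongrightarrow> a"
  shows "a \<in> cube"
proof -
  have "0 \<le> a" by (rule lim_le[of "\<lambda>_. 0" s]) (use assms in \<open>auto simp: cube_def\<close>)
  moreover have "a \<le> 1" by (rule lim_le[of s "\<lambda>_. 1"]) (use assms in \<open>auto simp: cube_def\<close>)
  ultimately show ?thesis by (simp add: cube_def)
qed

lemma grad_lower:
  fixes \<Phi> :: "real^'d \<Rightarrow> real" and \<phi> :: "real^'d \<Rightarrow> real^'d"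
  assumes D: "pos_diag D"
    and der: "\<And>x. x \<in> cube \<Longrightarrow> (\<Phi> has_derivative (\<lambda>h. (\<phi> x v* D) \<bullet> h)) (at x within cube)"
    and mono: "\<And>x y. x \<in> cube \<Longrightarrow> y \<in> cube \<Longrightarrow> x \<le> y \<Longrightarrow> \<phi> x \<le> \<phi> y"
    and u: "u \<in> cube" and v: "v \<in> cube" and uv: "u \<le> v"
  shows "(\<phi> u v* D) \<bullet> (v - u) \<le> \<Phi> v - \<Phi> u"
proof -
  define p where "p = (\<lambda>t::real. u + t *\<^sub>R (v - u))"
  have pc: "p t \<in> cube \<and> u \<le> p t" if "t \<in> {0..1}" for t
  proof -
    have "0 \<le> p t $ i \<and> p t $ i \<le> 1 \<and> u$i \<le> p t $ i" for i
    proof -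
      have a: "0 \<le> u$i" "v$i \<le> 1" "u$i \<le> v$i" using u v uv by (auto simp: cube_def less_eq_vec_def)
      have b: "p t $ i = u$i + t * (v$i - u$i)" by (simp add: p_def algebra_simps)
      have c: "0 \<le> t * (v$i - u$i)" using that a by auto
      have d: "t * (v$i - u$i) \<le> v$i - u$i" using that a by (intro mult_left_le_one_le) auto
      show ?thesis using a b c d by linarith
    qed
    then show ?thesis by (auto simp: cube_def less_eq_vec_def)
  qed
  have dp: "(p has_derivative (\<lambda>h. h *\<^sub>R (v - u))) (at t within {0..1})" for t
    unfolding p_def by (auto intro!: derivative_eq_intros)
  have dc: "((\<Phi> \<circ> p) has_derivative ((\<lambda>h. (\<phi> (p t) v* D) \<bullet> h) \<circ> (\<lambda>h. h *\<^sub>R (v - u)))) (at t within {0..1})"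
    if "t \<in> {0..1}" for t
    apply (rule diff_chain_within[OF dp])
    apply (rule has_derivative_subset[OF der])
    using pc that by auto
  have "\<exists>t\<in>{0..1}. (\<Phi> \<circ> p) 1 - (\<Phi> \<circ> p) 0 = ((\<lambda>h. (\<phi> (p t) v* D) \<bullet> h) \<circ> (\<lambda>h. h *\<^sub>R (v - u))) (1 - 0)"
    by (rule mvt_very_simple[where f'="\<lambda>t. (\<lambda>h. (\<phi> (p t) v* D) \<bullet> h) \<circ> (\<lambda>h. h *\<^sub>R (v - u))"])
       (use dc in \<open>auto simp del: o_apply simp add: comp_def[of \<Phi> p, symmetric]\<close>)
  then obtain t where t: "t \<in> {0..1}" and eq: "\<Phi> v - \<Phi> u = (\<phi> (p t) v* D) \<bullet> (v - u)"
    by (auto simp: p_def)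
  have le: "\<phi> u \<le> \<phi> (p t)" using mono[OF u] pc[OF t] by auto
  have "(\<phi> u v* D) \<bullet> (v - u) \<le> (\<phi> (p t) v* D) \<bullet> (v - u)"
    unfolding vmD[OF D]
  proof (rule sum_mono)
    fix i
    have "\<phi> u $ i * D$i$i \<le> \<phi> (p t) $ i * D$i$i"
      using le D by (intro mult_right_mono) (auto simp: less_eq_vec_def pos_diag_def less_imp_le)
    moreover have "0 \<le> (v - u) $ i" using uv by (auto simp: less_eq_vec_def)
    ultimately show "\<phi> u $ i * D$i$i * (v - u) $ i \<le> \<phi> (p t) $ i * D$i$i * (v - u) $ i"
      by (rule mult_right_mono)
  qed
  then show ?thesis using eq by simp
qed

lemma der_cont:
  assumes "\<And>x. x \<in> S \<Longrightarrow> (h has_derivative h' x) (at x within S)"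
  shows "continuous_on S h"
  using assms has_derivative_continuous continuous_on_eq_continuous_within by blast

lemma pot_step:
  assumes adm: "vector_admissible f g F G D" and e: "e \<in> Eset"
    and a: "a \<in> cube" and aT: "a \<le> f (g a) e"
  shows "potU g F G D (f (g a) e) e \<le> potU g F G D a e"
proof -
  note A = adm[unfolded vector_admissible_def]
  have D: "pos_diag D" using A by blast
  define b where "b = f (g a) e"
  have ga: "g a \<in> cube" using A a by blast
  have b: "b \<in> cube" using A ga e b_def by blast
  have gb: "g b \<in> cube" using A b by blast
  have ab: "a \<le> b" using aT b_def by simp
  have gab: "g a \<le> g b" using A a b ab by blast
  have h1: "(g a v* D) \<bullet> (b - a) \<le> G b - G a"
    by (rule grad_lower[OF D]) (use A a b ab in auto)
  have h2: "(f (g a) e v* D) \<bullet> (g b - g a) \<le> F (g b) e - F (g a) e"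
    by (rule grad_lower[OF D, where \<Phi>="\<lambda>y. F y e" and \<phi>="\<lambda>y. f y e"]) (use A e ga gb gab in auto)
  have z: "(g b v* D) \<bullet> b - (g a v* D) \<bullet> a - (g a v* D) \<bullet> (b - a) - (b v* D) \<bullet> (g b - g a) = 0"
    unfolding vmD[OF D] sum_subtractf[symmetric] by (simp add: algebra_simps)
  show ?thesis using h1 h2 z unfolding potU_def b_def[symmetric] by linarith
qed

theorem lemma10:
  fixes f :: "real^'d \<Rightarrow> real \<Rightarrow> real^'d" and g :: "real^'d \<Rightarrow> real^'d"
    and F :: "real^'d \<Rightarrow> real \<Rightarrow> real" and G :: "real^'d \<Rightarrow> real"
    and D :: "real^'d^'d" and e :: real and L w :: nat and X :: "int \<Rightarrow> real^'d"
  assumes adm: "vector_admissible f g F G D"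
    and e: "e \<in> Eset"
    and w: "w \<ge> 1"
    and lim: "\<forall>i. (\<lambda>l. sc_iter f g L w e l i) \<longlonglongrightarrow> X i"
  shows "\<exists>xinf. (\<lambda>l. single_iter f g e (X (i0_of w)) l) \<longlonglongrightarrow> xinf
           \<and> X (i0_of w) \<le> xinf
           \<and> potU g F G D (X (i0_of w)) e \<ge> potU g F G D xinf e"
proof -
  note A = adm[unfolded vector_admissible_def]
  have D: "pos_diag D" using A by blast
  have fc: "\<And>x ee. x \<in> cube \<Longrightarrow> ee \<in> Eset \<Longrightarrow> f x ee \<in> cube" using A by blast
  have gc: "\<And>x. x \<in> cube \<Longrightarrow> g x \<in> cube" using A by blast
  have fm: "\<And>x y ee. ee \<in> Eset \<Longrightarrow> x \<in> cube \<Longrightarrow> y \<in> cube \<Longrightarrow> x \<le> y \<Longrightarrow> f x ee \<le> f y ee"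
    using A by blast
  have gm: "\<And>x y. x \<in> cube \<Longrightarrow> y \<in> cube \<Longrightarrow> x \<le> y \<Longrightarrow> g x \<le> g y" using A by blast
  have f0: "\<And>x. x \<in> cube \<Longrightarrow> f x 0 = 0" using A by blast
  have E0: "0 \<in> Eset" by (simp add: Eset_def)
  have c0: "(0::real^'d) \<in> cube" and c1: "(1::real^'d) \<in> cube" by (auto simp: cube_def less_eq_vec_def)
  have fle: "f y ee \<le> f y e" if "y \<in> cube" "ee = e \<or> ee = 0" for y ee
    using that fc[OF that(1) e] f0[OF that(1)] by (auto simp: cube_def)
  define i0 where "i0 = i0_of w"
  have i0f: "0 \<le> i0" "2 * i0 \<le> int w - 1" using i0_facts[OF w] i0_def by auto
  define T where "T y = f (g y) e" for y
  have Tc: "y \<in> cube \<Longrightarrow> T y \<in> cube" for y using T_def fc gc e by auto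
  have Tm: "x \<in> cube \<Longrightarrow> y \<in> cube \<Longrightarrow> x \<le> y \<Longrightarrow> T x \<le> T y" for x y
    using T_def fm gm gc e by auto
  have cg: "continuous_on cube g"
  proof -
    obtain h' h'' where "\<forall>x\<in>cube. (g has_derivative blinfun_apply (h' x)) (at x within cube)"
      using A[THEN conjunct2, THEN conjunct2, THEN conjunct2, THEN conjunct2, THEN conjunct2,
          THEN conjunct2, THEN conjunct2, THEN conjunct2, THEN conjunct1] unfolding C2_on_def by blast
    then show ?thesis by (intro der_cont[where h'="\<lambda>x. blinfun_apply (h' x)"]) auto
  qed
  have cf2: "continuous_on (cube \<times> Eset) (\<lambda>(x, ee). f x ee)"
  proof -
    obtain h' h'' where "\<forall>x\<in>cube \<times> Eset. ((\<lambda>(x, ee). f x ee) has_derivative blinfun_apply (h' x)) (at x within cube \<times> Eset)"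
      using A[THEN conjunct2, THEN conjunct2, THEN conjunct2, THEN conjunct2, THEN conjunct2,
          THEN conjunct2, THEN conjunct2, THEN conjunct1] unfolding C2_on_def by blast
    then show ?thesis by (intro der_cont[where h'="\<lambda>x. blinfun_apply (h' x)"]) auto
  qed
  have cf: "continuous_on cube (\<lambda>x. f x e)"
  proof -
    have "continuous_on cube (\<lambda>x. (x, e))" by (intro continuous_intros)
    moreover have "(\<lambda>x. (x, e)) ` cube \<subseteq> cube \<times> Eset" using e by auto
    ultimately show ?thesis using continuous_on_compose2[OF cf2, of cube "\<lambda>x. (x, e)"] by simp
  qed
  have cT: "continuous_on cube T"
    unfolding T_def using continuous_on_compose2[OF cf cg] gc by auto
  have cG: "continuous_on cube G"
    by (rule der_cont) (use A in blast)
  have cF: "continuous_on cube (\<lambda>y. F y e)"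
    by (rule der_cont) (use A e in blast)
  have cU: "continuous_on cube (\<lambda>x. potU g F G D x e)"
  proof -
    have "continuous_on cube (\<lambda>x. F (g x) e)"
      using continuous_on_compose2[OF cF cg] gc by auto
    then show ?thesis unfolding potU_def vmD[OF D]
      by (intro continuous_intros cg cG)
  qed
  define xs where "xs = sc_iter f g L w e"
  define ep where "ep = (\<lambda>i::int. if - int L \<le> i \<and> i \<le> int L then e else 0)"
  define Av where "Av x p = (1 / real w) *\<^sub>R (\<Sum>j<w. g (x (p + int j)))" for x :: "int \<Rightarrow> real^'d" and p
  define h where "h x p = f (Av x p) (ep p)" for x p
  define upd where "upd x i = (1 / real w) *\<^sub>R (\<Sum>k<w. h x (i - int k))" for x i
  have sucq: "xs (Suc l) = (\<lambda>i. if i < - int L then 0 else if i \<le> i0 then upd (xs l) i else upd (xs l) i0)" for l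
    unfolding xs_def upd_def h_def Av_def ep_def i0_def
    by (intro ext) (simp add: Let_def ac_simps diff_add_eq add_diff_eq)
  have epE: "ep p = e \<or> ep p = 0" for p by (simp add: ep_def)
  have epS: "ep p \<in> Eset" for p using epE[of p] e E0 by auto
  define Inv where "Inv x \<longleftrightarrow> (\<forall>i. x i \<in> cube) \<and> (\<forall>i. x i \<le> x (i + 1)) \<and> (\<forall>m. i0 < m \<longrightarrow> x m = x i0)"
    for x :: "int \<Rightarrow> real^'d"
  have Avc: "Av x p \<in> cube" if "\<forall>i. x i \<in> cube" for x p
    unfolding Av_def by (rule avg_cube[OF w]) (use that gc in auto)
  have hc: "h x p \<in> cube" if "\<forall>i. x i \<in> cube" for x p
    unfolding h_def using fc[OF Avc[OF that] epS] .
  have updc: "upd x i \<in> cube" if "\<forall>i. x i \<in> cube" for x i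
    unfolding upd_def by (rule avg_cube[OF w]) (use hc[OF that] in auto)
  have mono_of: "x a \<le> x b" if "Inv x" "a \<le> b" for x a b
    using mono_adj[of x a b] that unfolding Inv_def by auto
  have below: "x p \<le> x i0" if "Inv x" for x p
  proof (cases "p \<le> i0")
    case True then show ?thesis using mono_of[OF that] by auto
  next
    case False then show ?thesis using that unfolding Inv_def by auto
  qed
  have hmono: "h x (q - int w) \<le> h x q" if I: "Inv x" and q: "q \<le> i0" for x q
  proof (cases "- int L \<le> q - int w \<and> q - int w \<le> int L")
    case True
    then have "ep (q - int w) = e" "ep q = e" using q i0f by (auto simp: ep_def)
    moreover have "Av x (q - int w) \<le> Av x q"
      unfolding Av_def
      by (rule avg_mono, rule gm) (use I mono_of[OF I] in \<open>auto simp: Inv_def\<close>)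
    ultimately show ?thesis unfolding h_def
      using fm[OF e Avc Avc] I by (auto simp: Inv_def)
  next
    case False
    then have "ep (q - int w) = 0" by (auto simp: ep_def)
    then have "h x (q - int w) = 0" unfolding h_def using f0 Avc I by (auto simp: Inv_def)
    then show ?thesis using hc[of x q] I by (auto simp: Inv_def cube_def)
  qed
  have updmono: "upd x (q - 1) \<le> upd x q" if I: "Inv x" and q: "q \<le> i0" for x q
  proof -
    obtain w' where w': "w = Suc w'" using w by (cases w) auto
    have "(\<Sum>k<w. h x (q - 1 - int k)) $ c \<le> (\<Sum>k<w. h x (q - int k)) $ c" for c
    proof -
      have e1: "(\<Sum>k<w. h x (q - int k) $ c) = h x q $ c + (\<Sum>k<w'. h x (q - 1 - int k) $ c)"
        unfolding w' sum.lessThan_Suc_shift by (simp add: algebra_simps)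
      have e2: "(\<Sum>k<w. h x (q - 1 - int k) $ c) = (\<Sum>k<w'. h x (q - 1 - int k) $ c) + h x (q - int w) $ c"
        unfolding w' sum.lessThan_Suc by (simp add: algebra_simps)
      have "h x (q - int w) $ c \<le> h x q $ c" using hmono[OF I q] by (auto simp: less_eq_vec_def)
      then show ?thesis using e1 e2 by simp
    qed
    then show ?thesis unfolding upd_def by (intro vscale_mono) (auto simp: less_eq_vec_def)
  qed
  have updT: "upd x i0 \<le> T (x i0)" if I: "Inv x" for x
  proof -
    have xc: "x i0 \<in> cube" using I by (auto simp: Inv_def)
    have "h x (i0 - int k) \<le> T (x i0)" for k
    proof -
      have "Av x (i0 - int k) \<le> (1 / real w) *\<^sub>R (\<Sum>j<w. g (x i0))"
        unfolding Av_def
        by (rule avg_mono, rule gm) (use I below[OF I] in \<open>auto simp: Inv_def\<close>)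
      then have "Av x (i0 - int k) \<le> g (x i0)" by (metis avg_const[OF w])
      then have "h x (i0 - int k) \<le> f (g (x i0)) (ep (i0 - int k))"
        unfolding h_def using fm[OF epS Avc gc[OF xc]] I by (auto simp: Inv_def)
      also have "\<dots> \<le> T (x i0)" unfolding T_def using fle[OF gc[OF xc] epE] .
      finally show ?thesis .
    qed
    then have "upd x i0 \<le> (1 / real w) *\<^sub>R (\<Sum>k<w. T (x i0))"
      unfolding upd_def by (intro avg_mono) auto
    then show ?thesis by (metis avg_const[OF w])
  qed
  have Inv_step: "Inv (\<lambda>i. if i < - int L then 0 else if i \<le> i0 then upd x i else upd x i0)"
    if I: "Inv x" for x
  proof -
    have xc: "\<forall>i. x i \<in> cube" using I by (simp add: Inv_def)
    have adj: "(if i < - int L then 0 else if i \<le> i0 then upd x i else upd x i0)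
       \<le> (if i + 1 < - int L then 0 else if i + 1 \<le> i0 then upd x (i + 1) else upd x i0)" for i
    proof -
      consider "i + 1 < - int L" | "i + 1 = - int L" | "- int L \<le> i" "i + 1 \<le> i0" | "- int L \<le> i" "i0 < i + 1"
        by linarith
      then show ?thesis
      proof cases
        case 1 then show ?thesis by simp
      next
        case 2 then show ?thesis using updc[OF xc] i0f by (auto simp: cube_def)
      next
        case 3 then show ?thesis using updmono[OF I 3(2)] by simp
      next
        case 4 then show ?thesis using i0f by auto
      qed
    qed
    show ?thesis unfolding Inv_def using updc[OF xc] c0 adj i0f by auto
  qed
  have Inv_all: "Inv (xs l)" for l
  proof (induction l)
    case 0
    show ?case unfolding Inv_def xs_def using c0 c1 i0f
      by (auto simp: less_eq_vec_def cube_def)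
  next
    case (Suc l)
    show ?case unfolding sucq using Inv_step[OF Suc] .
  qed
  have limX: "(\<lambda>l. xs l i) \<longlonglongrightarrow> X i" for i using lim xs_def by auto
  define x0 where "x0 = X i0"
  have x0c: "x0 \<in> cube"
    unfolding x0_def by (rule lim_cube[OF _ limX]) (use Inv_all in \<open>auto simp: Inv_def\<close>)
  have x0T: "x0 \<le> T x0"
  proof -
    have a: "(\<lambda>l. xs (Suc l) i0) \<longlonglongrightarrow> x0" unfolding x0_def using LIMSEQ_Suc[OF limX] .
    have b: "(\<lambda>l. T (xs l i0)) \<longlonglongrightarrow> T x0"
      by (rule continuous_on_tendsto_compose[OF cT limX[of i0, folded x0_def] x0c])
         (use Inv_all in \<open>auto simp: Inv_def\<close>)
    have "xs (Suc l) i0 \<le> T (xs l i0)" for l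
      using updT[OF Inv_all[of l]] i0f unfolding sucq by auto
    then show ?thesis by (rule lim_le[OF _ a b])
  qed
  define s where "s l = single_iter f g e x0 l" for l
  have sS: "s (Suc l) = T (s l)" for l by (simp add: s_def single_iter_def T_def)
  have s0: "s 0 = x0" by (simp add: s_def single_iter_def)
  have sinv: "s l \<in> cube \<and> s l \<le> s (Suc l) \<and> x0 \<le> s l" for l
  proof (induction l)
    case 0 then show ?case using s0 sS x0c x0T by simp
  next
    case (Suc l)
    then have "s (Suc l) \<in> cube" using sS Tc by simp
    moreover have "s (Suc l) \<le> s (Suc (Suc l))" using Suc Tm Tc sS by simp
    moreover have "x0 \<le> s (Suc l)" using Suc order.trans by blast
    ultimately show ?case by blast
  qed
  define xinf where "xinf = (\<chi> c. SUP l. s l $ c)"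
  have conv: "s \<longlonglongrightarrow> xinf"
  proof (rule vec_tendstoI)
    fix c
    have "(\<lambda>l. s l $ c) \<longlonglongrightarrow> (SUP l. s l $ c)"
    proof (rule LIMSEQ_incseq_SUP)
      show "bdd_above (range (\<lambda>l. s l $ c))"
        using sinv by (intro bdd_aboveI[of _ 1]) (auto simp: cube_def less_eq_vec_def)
      show "incseq (\<lambda>l. s l $ c)"
        using sinv by (intro incseq_SucI) (auto simp: less_eq_vec_def)
    qed
    then show "(\<lambda>l. s l $ c) \<longlonglongrightarrow> xinf $ c" by (simp add: xinf_def)
  qed
  have xinfc: "xinf \<in> cube" by (rule lim_cube[OF _ conv]) (use sinv in blast)
  have x0le: "x0 \<le> xinf" by (rule lim_le[OF _ tendsto_const conv]) (use sinv in blast)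
  have Ud: "potU g F G D (s l) e \<le> potU g F G D x0 e" for l
  proof (induction l)
    case 0 then show ?case using s0 by simp
  next
    case (Suc l)
    have "potU g F G D (s (Suc l)) e \<le> potU g F G D (s l) e"
      unfolding sS T_def
      by (rule pot_step[OF adm e]) (use sinv[of l] sS T_def in auto)
    then show ?case using Suc by linarith
  qed
  have "(\<lambda>l. potU g F G D (s l) e) \<longlonglongrightarrow> potU g F G D xinf e"
    by (rule continuous_on_tendsto_compose[OF cU conv xinfc]) (use sinv in auto)
  then have "potU g F G D xinf e \<le> potU g F G D x0 e"
    by (rule LIMSEQ_le_const2) (use Ud in blast)
  moreover have "(\<lambda>l. single_iter f g e (X (i0_of w)) l) \<longlonglongrightarrow> xinf"
    using conv unfolding s_def x0_def i0_def .
  ultimately show ?thesis using x0le unfolding x0_def i0_def by blast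
qed

end
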